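(* Suppose $\det\begin{pmatrix}\mathcal{D}_\alpha X^I\\ X^I\end{pmatrix}\neq 0$, that $\langle U_\alpha,U_\beta\rangle=0$ and $\langle V,U_\alpha\rangle=0$ hold, and that there are functions $\tilde F_I(X^J)$ with $\tilde F_I(X^J(z,\bar z))=F_I(z,\bar z)$ and $\tilde F_I=X^J\partial_J\tilde F_I$. Then there exists a function $\tilde F(X^J)$ such that $\tilde F_I=\partial_I\tilde F(X)$.
   Context: $V=\begin{pmatrix}X^I\\ F_I\end{pmatrix}$ ($I=0,\dots,n$) over an $n$-dimensional Kähler manifold with coordinates $z^\alpha$ and Kähler potential $K$, $U_\alpha=\mathcal{D}_\alpha V=\partial_\alpha V+\tfrac12(\partial_\alpha K)V$; $\langle A,B\rangle=A^T\Omega B$ with $\Omega=\begin{pmatrix}0&\mathbb{1}\\-\mathbb{1}&0\end{pmatrix}$; $\partial_I=\partial/\partial X^I$. *)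

theory Defs
  imports "HOL-Analysis.Analysis"
begin

text \<open>Local complex coordinates z = (z^alpha) on the n-dimensional Kaehler manifold
  are modelled by vectors in complex^'n; all functions of (z, zbar) are functions
  complex^'n => complex, differentiable in the real sense.\<close>

definition wirt :: "(complex^'n \<Rightarrow> complex) \<Rightarrow> 'n \<Rightarrow> complex^'n \<Rightarrow> complex" where
  "wirt f a z = (frechet_derivative f (at z) (axis a 1)
                 - \<i> * frechet_derivative f (at z) (axis a \<i>)) / 2"

definition wirtbar :: "(complex^'n \<Rightarrow> complex) \<Rightarrow> 'n \<Rightarrow> complex^'n \<Rightarrow> complex" where
  "wirtbar f a z = (frechet_derivative f (at z) (axis a 1)
                 + \<i> * frechet_derivative f (at z) (axis a \<i>)) / 2"

definition covD :: "(complex^'n \<Rightarrow> real) \<Rightarrow> (complex^'n \<Rightarrow> complex) \<Rightarrow> 'n \<Rightarrow> complex^'n \<Rightarrow> complex" where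
  "covD K f a z = wirt f a z + wirt (\<lambda>w. complex_of_real (K w)) a z * f z / 2"

definition kmetric :: "(complex^'n \<Rightarrow> real) \<Rightarrow> 'n \<Rightarrow> 'n \<Rightarrow> complex^'n \<Rightarrow> complex" where
  "kmetric K a b z = wirt (wirtbar (\<lambda>w. complex_of_real (K w)) b) a z"

definition kaehler_potential :: "(complex^'n) set \<Rightarrow> (complex^'n \<Rightarrow> real) \<Rightarrow> bool" where
  "kaehler_potential \<Omega> K \<longleftrightarrow> open \<Omega> \<and>
     (\<forall>z\<in>\<Omega>. K differentiable (at z)) \<and>
     (\<forall>z\<in>\<Omega>. \<forall>b. wirtbar (\<lambda>w. complex_of_real (K w)) b differentiable (at z)) \<and>
     (\<forall>z\<in>\<Omega>. \<forall>v::complex^'n. v \<noteq> 0 \<longrightarrow>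
        (\<Sum>a\<in>UNIV. \<Sum>b\<in>UNIV. kmetric K a b z * v$a * cnj (v$b)) \<in> \<real> \<and>
        Re (\<Sum>a\<in>UNIV. \<Sum>b\<in>UNIV. kmetric K a b z * v$a * cnj (v$b)) > 0)"

definition symp :: "((complex^'i) \<times> (complex^'i)) \<Rightarrow> ((complex^'i) \<times> (complex^'i)) \<Rightarrow> complex" where
  "symp A B = (\<Sum>I\<in>UNIV. fst A $ I * snd B $ I - snd A $ I * fst B $ I)"

definition holo_on :: "(complex^'i) set \<Rightarrow> (complex^'i \<Rightarrow> complex) \<Rightarrow> bool" where
  "holo_on U f \<longleftrightarrow> (\<forall>x\<in>U. f differentiable (at x) \<and>
       (\<forall>v. frechet_derivative f (at x) (\<i> *s v) = \<i> * frechet_derivative f (at x) v))"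

definition hpartial :: "(complex^'i \<Rightarrow> complex) \<Rightarrow> 'i \<Rightarrow> complex^'i \<Rightarrow> complex" where
  "hpartial f I x = frechet_derivative f (at x) (axis I 1)"

text \<open>Componentwise covariant derivative of a vector valued section: U_alpha = D_alpha V.\<close>
definition covDvec :: "(complex^'n \<Rightarrow> real) \<Rightarrow> (complex^'n \<Rightarrow> complex^'i) \<Rightarrow> 'n \<Rightarrow> complex^'n \<Rightarrow> complex^'i" where
  "covDvec K f a z = (\<chi> I. covD K (\<lambda>w. f w $ I) a z)"

end

theory Submission
  imports Defs
begin

lemma clin_expand:
  fixes L :: "complex^'i \<Rightarrow> complex"
  assumes lin: "linear L" and cl: "\<And>v. L (\<i> *s v) = \<i> * L v"
  shows "L v = (\<Sum>J\<in>UNIV. v$J * L (axis J 1))"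
proof -
  have sc: "L (c *s w) = c * L w" for c w
  proof -
    have "c *s w = Re c *\<^sub>R w + Im c *\<^sub>R (\<i> *s w)"
      by (simp add: vec_eq_iff complex_eq_iff algebra_simps)
    then have "L (c *s w) = Re c *\<^sub>R L w + Im c *\<^sub>R L (\<i> *s w)"
      by (simp add: linear_add[OF lin] linear_scale[OF lin])
    also have "\<dots> = c * L w" using cl
      by (simp add: scaleR_conv_of_real complex_eq_iff algebra_simps)
    finally show ?thesis .
  qed
  have "L v = L (\<Sum>J\<in>UNIV. (v$J) *s axis J 1)" by (simp add: basis_expansion)
  also have "\<dots> = (\<Sum>J\<in>UNIV. L ((v$J) *s axis J 1))" by (simp add: linear_sum[OF lin])
  also have "\<dots> = (\<Sum>J\<in>UNIV. v$J * L (axis J 1))" by (simp add: sc)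
  finally show ?thesis .
qed

lemma has_derivative_vec_lambda_at:
  fixes f :: "'a::euclidean_space \<Rightarrow> 'b::real_normed_vector^'i"
  assumes d: "\<And>J. ((\<lambda>w. f w $ J) has_derivative f' J) (at z)"
  shows "(f has_derivative (\<lambda>h. \<chi> J. f' J h)) (at z)"
proof -
  have lin: "\<And>J. linear (f' J)" using d has_derivative_linear by blast
  have "linear (\<lambda>h. \<chi> J. f' J h)"
    by (rule linearI) (simp_all add: vec_eq_iff linear_add[OF lin] linear_scale[OF lin])
  then have bl: "bounded_linear (\<lambda>h. \<chi> J. f' J h)" using linear_conv_bounded_linear by blast
  have t: "\<And>J. ((\<lambda>y. ((f y $ J - f z $ J) - f' J (y - z)) /\<^sub>R norm (y - z)) \<longlongrightarrow> 0) (at z)"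
    using d unfolding has_derivative_def by (simp add: Lim_ident_at)
  have "((\<lambda>y. \<chi> J. ((f y $ J - f z $ J) - f' J (y - z)) /\<^sub>R norm (y - z)) \<longlongrightarrow> (\<chi> J. 0)) (at z)"
    by (rule tendsto_vec_lambda) (rule t)
  moreover have "(\<lambda>y. \<chi> J. ((f y $ J - f z $ J) - f' J (y - z)) /\<^sub>R norm (y - z))
     = (\<lambda>y. ((f y - f z) - (\<chi> J. f' J (y - z))) /\<^sub>R norm (y - z))"
    by (auto simp: vec_eq_iff)
  ultimately show ?thesis unfolding has_derivative_def using bl
    by (simp add: Lim_ident_at zero_vec_def)
qed

lemma chain_fd:
  fixes X :: "complex^'n \<Rightarrow> complex^'i" and f :: "complex^'i \<Rightarrow> complex"
  assumes Xd: "\<And>J. (\<lambda>w. X w $ J) differentiable (at z)"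
    and fd: "f differentiable (at (X z))"
    and cl: "\<And>v. frechet_derivative f (at (X z)) (\<i> *s v) = \<i> * frechet_derivative f (at (X z)) v"
  shows "frechet_derivative (\<lambda>w. f (X w)) (at z) h
       = (\<Sum>J\<in>UNIV. frechet_derivative (\<lambda>w. X w $ J) (at z) h * hpartial f J (X z))"
proof -
  have dX: "(X has_derivative (\<lambda>h. \<chi> J. frechet_derivative (\<lambda>w. X w $ J) (at z) h)) (at z)"
    by (rule has_derivative_vec_lambda_at) (use Xd frechet_derivative_works in blast)
  have df: "(f has_derivative frechet_derivative f (at (X z))) (at (X z))"
    using fd frechet_derivative_works by blast
  have "((f \<circ> X) has_derivative (frechet_derivative f (at (X z)) \<circ> (\<lambda>h. \<chi> J. frechet_derivative (\<lambda>w. X w $ J) (at z) h))) (at z)"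
    by (rule diff_chain_at[OF dX df])
  then have "((\<lambda>w. f (X w)) has_derivative (\<lambda>h. frechet_derivative f (at (X z)) (\<chi> J. frechet_derivative (\<lambda>w. X w $ J) (at z) h))) (at z)"
    by (simp add: comp_def)
  from frechet_derivative_at[OF this]
  have "frechet_derivative (\<lambda>w. f (X w)) (at z) = (\<lambda>h. frechet_derivative f (at (X z)) (\<chi> J. frechet_derivative (\<lambda>w. X w $ J) (at z) h))"
    by simp
  moreover have "linear (frechet_derivative f (at (X z)))" using fd linear_frechet_derivative by blast
  ultimately have "frechet_derivative (\<lambda>w. f (X w)) (at z) h = frechet_derivative f (at (X z)) (\<chi> J. frechet_derivative (\<lambda>w. X w $ J) (at z) h)"
    by simp
  also have "\<dots> = (\<Sum>J\<in>UNIV. (\<chi> J. frechet_derivative (\<lambda>w. X w $ J) (at z) h) $ J * frechet_derivative f (at (X z)) (axis J 1))"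
    by (rule clin_expand[OF \<open>linear (frechet_derivative f (at (X z)))\<close> cl])
  finally show ?thesis by (simp add: hpartial_def)
qed

lemma wirt_chain:
  fixes X :: "complex^'n \<Rightarrow> complex^'i" and f :: "complex^'i \<Rightarrow> complex"
  assumes Xd: "\<And>J. (\<lambda>w. X w $ J) differentiable (at z)"
    and fd: "f differentiable (at (X z))"
    and cl: "\<And>v. frechet_derivative f (at (X z)) (\<i> *s v) = \<i> * frechet_derivative f (at (X z)) v"
  shows "wirt (\<lambda>w. f (X w)) a z = (\<Sum>J\<in>UNIV. wirt (\<lambda>w. X w $ J) a z * hpartial f J (X z))"
proof -
  let ?a = "\<lambda>J. frechet_derivative (\<lambda>w. X w $ J) (at z) (axis a 1)"
  let ?b = "\<lambda>J. frechet_derivative (\<lambda>w. X w $ J) (at z) (axis a \<i>)"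
  let ?A = "\<lambda>J. hpartial f J (X z)"
  have "(\<Sum>J\<in>UNIV. (?a J - \<i> * ?b J) / 2 * ?A J) = (\<Sum>J\<in>UNIV. ?a J * ?A J - \<i> * (?b J * ?A J)) / 2"
    by (simp add: sum_divide_distrib algebra_simps)
  also have "\<dots> = ((\<Sum>J\<in>UNIV. ?a J * ?A J) - \<i> * (\<Sum>J\<in>UNIV. ?b J * ?A J)) / 2"
    by (simp add: sum_subtractf sum_distrib_left)
  finally have e: "(\<Sum>J\<in>UNIV. (?a J - \<i> * ?b J) / 2 * ?A J) = ((\<Sum>J\<in>UNIV. ?a J * ?A J) - \<i> * (\<Sum>J\<in>UNIV. ?b J * ?A J)) / 2" .
  show ?thesis unfolding wirt_def chain_fd[OF Xd fd cl] by (rule e[symmetric])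
qed

lemma fd_transform:
  assumes "f differentiable (at z)" "open S" "z \<in> S" "\<And>x. x \<in> S \<Longrightarrow> f x = g x"
  shows "frechet_derivative f (at z) = frechet_derivative g (at z)"
proof -
  have "(f has_derivative frechet_derivative f (at z)) (at z)" using assms(1) frechet_derivative_works by blast
  then have "(g has_derivative frechet_derivative f (at z)) (at z)"
    using has_derivative_transform_within_open assms by blast
  then show ?thesis using frechet_derivative_at by blast
qed

lemma matrix_cancel:
  fixes E B :: "complex^'m^'m"
  assumes "det E \<noteq> 0" "E ** B ** transpose E = 0"
  shows "B = 0"
proof -
  have "invertible E" using assms(1) invertible_det_nz by blast
  then obtain E' where E': "E' ** E = mat 1" unfolding invertible_def by blast
  have "invertible (transpose E)" using assms(1) invertible_det_nz det_transpose by metis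
  then obtain T' where T': "transpose E ** T' = mat 1" unfolding invertible_def by blast
  have z1: "\<And>M :: complex^'m^'m. M ** 0 = 0" by (simp add: matrix_matrix_mult_def vec_eq_iff)
  have z2: "\<And>M :: complex^'m^'m. 0 ** M = 0" by (simp add: matrix_matrix_mult_def vec_eq_iff)
  have "B = E' ** (E ** B ** transpose E) ** T'"
    by (metis E' T' matrix_mul_assoc matrix_mul_lid matrix_mul_rid)
  then show ?thesis using assms(2) z1 z2 by simp
qed

lemma Fp_deriv:
  fixes Ft :: "'i \<Rightarrow> complex^'i \<Rightarrow> complex"
  assumes "\<forall>I. holo_on U (Ft I)" "x \<in> U"
  shows "((\<lambda>x. \<Sum>I\<in>UNIV. (x$I/2) * Ft I x) has_derivative
          (\<lambda>h. \<Sum>I\<in>UNIV. (x$I/2) * frechet_derivative (Ft I) (at x) h + (h$I/2) * Ft I x)) (at x)"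
proof (rule has_derivative_sum)
  fix I
  have d1: "((\<lambda>x. x$I/2) has_derivative (\<lambda>h. h$I/2)) (at x)"
    by (rule bounded_linear_imp_has_derivative) (rule bounded_linear_compose[OF bounded_linear_divide bounded_linear_vec_nth])
  have d2: "(Ft I has_derivative frechet_derivative (Ft I) (at x)) (at x)"
    using assms frechet_derivative_works unfolding holo_on_def by blast
  show "((\<lambda>x. (x$I/2) * Ft I x) has_derivative
          (\<lambda>h. (x$I/2) * frechet_derivative (Ft I) (at x) h + (h$I/2) * Ft I x)) (at x)"
    using has_derivative_mult[OF d1 d2] .
qed

theorem lemma6:
  fixes \<Omega> :: "(complex^'n) set"
    and K :: "complex^'n \<Rightarrow> real"
    and X F :: "complex^'n \<Rightarrow> complex^('n option)"
    and U :: "(complex^('n option)) set"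
    and Ft :: "'n option \<Rightarrow> complex^('n option) \<Rightarrow> complex"
  assumes kaehler: "kaehler_potential \<Omega> K"
    and X_diff: "\<forall>z\<in>\<Omega>. \<forall>I. (\<lambda>w. X w $ I) differentiable (at z)"
    and F_diff: "\<forall>z\<in>\<Omega>. \<forall>I. (\<lambda>w. F w $ I) differentiable (at z)"
    and det_nz: "\<forall>z\<in>\<Omega>. det (\<chi> r c. case r of None \<Rightarrow> X z $ c
                                          | Some a \<Rightarrow> covD K (\<lambda>w. X w $ c) a z) \<noteq> 0"
    and UU: "\<forall>z\<in>\<Omega>. \<forall>a b. symp (covDvec K X a z, covDvec K F a z)
                               (covDvec K X b z, covDvec K F b z) = 0"
    and VU: "\<forall>z\<in>\<Omega>. \<forall>a. symp (X z, F z) (covDvec K X a z, covDvec K F a z) = 0"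
    and U_open: "open U"
    and X_in_U: "\<forall>z\<in>\<Omega>. X z \<in> U"
    and Ft_holo: "\<forall>I. holo_on U (Ft I)"
    and Ft_F: "\<forall>z\<in>\<Omega>. \<forall>I. Ft I (X z) = F z $ I"
    and Ft_euler: "\<forall>x\<in>U. \<forall>I. Ft I x = (\<Sum>J\<in>UNIV. x $ J * hpartial (Ft I) J x)"
  shows "\<exists>Fp. holo_on U Fp \<and> (\<forall>z\<in>\<Omega>. \<forall>I. Ft I (X z) = hpartial Fp I (X z))"
proof -
  have openO: "open \<Omega>" using kaehler unfolding kaehler_potential_def by blast
  have sym: "hpartial (Ft I) J (X z) = hpartial (Ft J) I (X z)" if zO: "z \<in> \<Omega>" for z I J
  proof -
    define x where "x = X z"
    have xU: "x \<in> U" using X_in_U zO x_def by blast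
    define A where "A I J = hpartial (Ft I) J x" for I J
    have Xd: "\<And>J. (\<lambda>w. X w $ J) differentiable (at z)" using X_diff zO by blast
    have Ftd: "\<And>I. Ft I differentiable (at (X z))" using Ft_holo xU x_def unfolding holo_on_def by blast
    have Ftc: "\<And>I v. frechet_derivative (Ft I) (at (X z)) (\<i> *s v) = \<i> * frechet_derivative (Ft I) (at (X z)) v"
      using Ft_holo xU x_def unfolding holo_on_def by blast
    have wF: "wirt (\<lambda>w. F w $ I) a z = (\<Sum>J\<in>UNIV. wirt (\<lambda>w. X w $ J) a z * A I J)" for a I
    proof -
      have "frechet_derivative (\<lambda>w. F w $ I) (at z) = frechet_derivative (\<lambda>w. Ft I (X w)) (at z)"
        by (rule fd_transform[OF _ openO zO]) (use F_diff zO Ft_F in auto)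
      then have "wirt (\<lambda>w. F w $ I) a z = wirt (\<lambda>w. Ft I (X w)) a z" unfolding wirt_def by simp
      also have "\<dots> = (\<Sum>J\<in>UNIV. wirt (\<lambda>w. X w $ J) a z * A I J)"
        unfolding A_def x_def by (rule wirt_chain[OF Xd Ftd Ftc])
      finally show ?thesis .
    qed
    have Fz: "F z $ I = (\<Sum>J\<in>UNIV. X z $ J * A I J)" for I
      using Ft_F zO Ft_euler xU unfolding A_def x_def by metis
    have cF: "covD K (\<lambda>w. F w $ I) a z = (\<Sum>J\<in>UNIV. A I J * covD K (\<lambda>w. X w $ J) a z)" for a I
      unfolding covD_def wF Fz
      by (simp add: sum_distrib_left sum_distrib_right sum_divide_distrib sum.distrib algebra_simps)
    define E where "E = (\<chi> r c. case r of None \<Rightarrow> X z $ c | Some a \<Rightarrow> covD K (\<lambda>w. X w $ c) a z)"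
    have detE: "det E \<noteq> 0" using det_nz zO unfolding E_def by blast
    define G where "G r I = (\<Sum>J\<in>UNIV. A I J * E$r$J)" for r I
    have XE: "X z = E $ None" by (simp add: E_def vec_eq_iff)
    have XaE: "covDvec K X a z = E $ Some a" for a by (simp add: E_def vec_eq_iff covDvec_def)
    have FG: "F z = (\<chi> I. G None I)" by (simp add: G_def E_def vec_eq_iff Fz mult.commute)
    have FaG: "covDvec K F a z = (\<chi> I. G (Some a) I)" for a by (simp add: G_def E_def vec_eq_iff covDvec_def cF)
    have S: "(\<Sum>I\<in>UNIV. E$r$I * G s I - G r I * E$s$I) = 0" for r s
    proof (cases r; cases s)
      assume "r = None" "s = None" then show ?thesis by (simp add: mult.commute)
    next
      fix b assume "r = None" "s = Some b"
      moreover have "symp (X z, F z) (covDvec K X b z, covDvec K F b z) = 0" using VU zO by blast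
      ultimately show ?thesis by (simp add: symp_def XE XaE FG FaG)
    next
      fix a assume "r = Some a" "s = None"
      then have "(\<Sum>I\<in>UNIV. E$r$I * G s I - G r I * E$s$I) = - symp (X z, F z) (covDvec K X a z, covDvec K F a z)"
        by (simp add: symp_def XE XaE FG FaG sum_negf[symmetric] algebra_simps)
      then show ?thesis using VU zO by simp
    next
      fix a b assume "r = Some a" "s = Some b"
      moreover have "symp (covDvec K X a z, covDvec K F a z) (covDvec K X b z, covDvec K F b z) = 0" using UU zO by blast
      ultimately show ?thesis by (simp add: symp_def XE XaE FG FaG)
    qed
    define B where "B = (\<chi> I J. A I J - A J I)"
    have "E ** B ** transpose E = 0"
    proof -
      have "(E ** B ** transpose E)$r$s = (\<Sum>I\<in>UNIV. E$r$I * G s I - G r I * E$s$I)" for r s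
      proof -
        have "(E ** B ** transpose E)$r$s = (\<Sum>J\<in>UNIV. (\<Sum>I\<in>UNIV. E$r$I * (A I J - A J I)) * E$s$J)"
          by (simp add: matrix_matrix_mult_def transpose_def B_def)
        also have "\<dots> = (\<Sum>J\<in>UNIV. \<Sum>I\<in>UNIV. E$r$I * A I J * E$s$J - E$r$I * A J I * E$s$J)"
          by (intro sum.cong refl) (simp add: sum_distrib_right sum_distrib_left sum_subtractf[symmetric] algebra_simps)
        also have "\<dots> = (\<Sum>I\<in>UNIV. \<Sum>J\<in>UNIV. E$r$I * A I J * E$s$J - E$r$I * A J I * E$s$J)"
          by (rule sum.swap)
        also have "\<dots> = (\<Sum>I\<in>UNIV. \<Sum>J\<in>UNIV. E$r$I * A I J * E$s$J) - (\<Sum>I\<in>UNIV. \<Sum>J\<in>UNIV. E$r$I * A J I * E$s$J)"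
          by (simp add: sum_subtractf)
        also have "(\<Sum>I\<in>UNIV. \<Sum>J\<in>UNIV. E$r$I * A J I * E$s$J) = (\<Sum>J\<in>UNIV. \<Sum>I\<in>UNIV. E$r$I * A J I * E$s$J)"
          by (rule sum.swap)
        also have "(\<Sum>I\<in>UNIV. \<Sum>J\<in>UNIV. E$r$I * A I J * E$s$J) - (\<Sum>J\<in>UNIV. \<Sum>I\<in>UNIV. E$r$I * A J I * E$s$J)
           = (\<Sum>I\<in>UNIV. E$r$I * G s I - G r I * E$s$I)"
          by (simp add: G_def sum_subtractf sum_distrib_left sum_distrib_right algebra_simps)
        finally show ?thesis .
      qed
      then show ?thesis using S by (simp add: vec_eq_iff)
    qed
    then have "B = 0" using matrix_cancel detE by blast
    then have "B $ I $ J = 0" by simp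
    then show ?thesis by (simp add: B_def A_def x_def)
  qed
  define Fp where "Fp = (\<lambda>x. \<Sum>I\<in>UNIV. (x$I/2) * Ft I x)"
  define DFp where "DFp x = (\<lambda>h. \<Sum>I\<in>UNIV. (x$I/2) * frechet_derivative (Ft I) (at x) h + (h$I/2) * Ft I x)" for x
  have Fpd: "(Fp has_derivative DFp x) (at x)" if "x \<in> U" for x
    unfolding Fp_def DFp_def by (rule Fp_deriv[OF Ft_holo that])
  have fdFp: "frechet_derivative Fp (at x) = DFp x" if "x \<in> U" for x
    using frechet_derivative_at[OF Fpd[OF that]] by simp
  have holo: "holo_on U Fp"
    unfolding holo_on_def
  proof (intro ballI conjI allI)
    fix x assume xU: "x \<in> U"
    show "Fp differentiable (at x)" using Fpd[OF xU] differentiable_def by blast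
    fix v
    have c: "\<And>I. frechet_derivative (Ft I) (at x) (\<i> *s v) = \<i> * frechet_derivative (Ft I) (at x) v"
      using Ft_holo xU unfolding holo_on_def by blast
    show "frechet_derivative Fp (at x) (\<i> *s v) = \<i> * frechet_derivative Fp (at x) v"
      unfolding fdFp[OF xU] DFp_def by (simp add: c sum_distrib_left algebra_simps)
  qed
  have hp: "hpartial Fp J x = (\<Sum>I\<in>UNIV. x$I * hpartial (Ft I) J x) / 2 + Ft J x / 2" if "x \<in> U" for x J
  proof -
    have "hpartial Fp J x = (\<Sum>I\<in>UNIV. (x$I/2) * hpartial (Ft I) J x) + (\<Sum>I\<in>UNIV. ((axis J 1 :: complex^_) $ I / 2) * Ft I x)"
      unfolding hpartial_def fdFp[OF that] DFp_def by (simp add: sum.distrib)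
    also have "(\<Sum>I\<in>UNIV. ((axis J 1 :: complex^_) $ I / 2) * Ft I x) = Ft J x / 2"
    proof -
      have "\<And>I. ((axis J 1 :: complex^_) $ I / 2) * Ft I x = (if I = J then Ft J x / 2 else 0)"
        by (simp add: axis_def)
      then show ?thesis by simp
    qed
    finally show ?thesis by (simp add: sum_divide_distrib)
  qed
  show ?thesis
  proof (intro exI conjI ballI allI)
    show "holo_on U Fp" by (rule holo)
    fix z J assume zO: "z \<in> \<Omega>"
    have xU: "X z \<in> U" using X_in_U zO by blast
    have "(\<Sum>I\<in>UNIV. X z $ I * hpartial (Ft I) J (X z)) = (\<Sum>I\<in>UNIV. X z $ I * hpartial (Ft J) I (X z))"
      using sym[OF zO] by simp
    also have "\<dots> = Ft J (X z)" using Ft_euler xU by simp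
    finally show "Ft J (X z) = hpartial Fp J (X z)" using hp[OF xU, of J] by simp
  qed
qed

end
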